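(* Let $g$ be a balanced $l$-variable Boolean function such that there exists $\bm{\beta}\in\mathbb{F}_2^l$ with $\mathrm{wt}(\bm{\beta})=1$ and $W_g^2(\bm{\beta})=\max_{\mathbf{v}\in\mathbb{F}_2^l}W_g^2(\mathbf{v})$. Define $f_0=g$ and $f_m=g\diamond f_{m-1}$ for $m\ge1$ (so $f_m$ is an $l^{m+1}$-variable Boolean function). Then for all $m\ge0$, $$H_\infty(f_m)=(m+1)\,H_\infty(g)\quad\text{and}\quad \frac{H_\infty(f_m)}{\mathrm{Inf}(f_m)}=\frac{H_\infty(g)}{\mathrm{Inf}(g)}\cdot\frac{m+1}{\mathrm{Inf}(g)^m}.$$
   Context: Boolean functions are maps $\mathbb{F}_2^n\to\mathbb{F}_2$; balanced means taking value $1$ on exactly half the inputs. Walsh transform: $W_f(\bm{\alpha})=2^{-n}\sum_{\mathbf{x}}(-1)^{f(\mathbf{x})\oplus\langle\mathbf{x},\bm{\alpha}\rangle}$. Logarithms are base 2. Min-entropy: $H_\infty(f)=\min_{\bm{\alpha}:W_f^2(\bm{\alpha})\ne0}\log(1/W_f^2(\bm{\alpha}))$. Influence: $\mathrm{Inf}(f)=\sum_{i=1}^n\Pr_{\mathbf{x}\in\mathbb{F}_2^n}[f(\mathbf{x})\ne f(\mathbf{x}\oplus\mathbf{e}_i)]$, where $\mathbf{e}_i$ is the $i$-th unit vector (equivalently $\mathrm{Inf}(f)=\sum_{\bm{\alpha}}\mathrm{wt}(\bm{\alpha})W_f^2(\bm{\alpha})$). Disjoint composition: for $f$ on $k$ variables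 and $h$ on $l$ variables, $(f\diamond h)(\mathbf{x})=f(h(\mathbf{x}^{(1)}),\ldots,h(\mathbf{x}^{(k)}))$ with $\mathbf{x}^{(i)}=(x_{(i-1)l+1},\ldots,x_{il})$. *)

theory Defs
  imports Complex_Main
begin

text \<open>Vectors of F_2^n are boolean lists of length n; a Boolean function on n variables
  is a map bool list => bool, only its values on the cube matter.\<close>

definition cube :: "nat \<Rightarrow> bool list set" where
  "cube n = {xs. length xs = n}"

definition ip :: "bool list \<Rightarrow> bool list \<Rightarrow> bool" where
  "ip x a = odd (length (filter id (map2 (\<and>) x a)))"

definition wt :: "bool list \<Rightarrow> nat" where
  "wt a = length (filter id a)"

definition balanced :: "nat \<Rightarrow> (bool list \<Rightarrow> bool) \<Rightarrow> bool" where
  "balanced n f \<longleftrightarrow> 2 * card {x \<in> cube n. f x} = 2 ^ n"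

definition walsh :: "nat \<Rightarrow> (bool list \<Rightarrow> bool) \<Rightarrow> bool list \<Rightarrow> real" where
  "walsh n f a = (\<Sum>x\<in>cube n. (if f x \<noteq> ip x a then -1 else 1)) / 2 ^ n"

definition min_entropy :: "nat \<Rightarrow> (bool list \<Rightarrow> bool) \<Rightarrow> real" where
  "min_entropy n f = Min {log 2 (1 / (walsh n f a)\<^sup>2) | a. a \<in> cube n \<and> (walsh n f a)\<^sup>2 \<noteq> 0}"

definition flip :: "bool list \<Rightarrow> nat \<Rightarrow> bool list" where
  "flip x i = x[i := \<not> x ! i]"

definition influence :: "nat \<Rightarrow> (bool list \<Rightarrow> bool) \<Rightarrow> real" where
  "influence n f = (\<Sum>i<n. real (card {x \<in> cube n. f x \<noteq> f (flip x i)}) / 2 ^ n)"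

definition dcomp :: "nat \<Rightarrow> nat \<Rightarrow> (bool list \<Rightarrow> bool) \<Rightarrow> (bool list \<Rightarrow> bool) \<Rightarrow> bool list \<Rightarrow> bool" where
  "dcomp k l f h x = f (map (\<lambda>i. h (take l (drop (i * l) x))) [0..<k])"

fun iter_comp :: "nat \<Rightarrow> (bool list \<Rightarrow> bool) \<Rightarrow> nat \<Rightarrow> bool list \<Rightarrow> bool" where
  "iter_comp l g 0 = g"
| "iter_comp l g (Suc m) = dcomp l (l ^ (Suc m)) g (iter_comp l g m)"

end

theory Submission
  imports Defs
begin

definition s :: "bool \<Rightarrow> real" where "s b = (if b then -1 else 1)"

lemma s_xor: "s (a \<noteq> b) = s a * s b" by (auto simp: s_def)
lemma s_sq[simp]: "(s b)^2 = 1" by (auto simp: s_def)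
lemma s_not[simp]: "s (\<not> b) = - s b" by (auto simp: s_def)
lemma abs_s[simp]: "\<bar>s b\<bar> = 1" by (auto simp: s_def)

lemma finite_cube[simp]: "finite (cube n)"
proof -
  have "cube n = {xs. set xs \<subseteq> UNIV \<and> length xs = n}" by (auto simp: cube_def)
  thus ?thesis using finite_lists_length_eq[of "UNIV::bool set" n] by simp
qed

lemma card_cube: "card (cube n) = 2 ^ n"
proof -
  have "cube n = {xs. set xs \<subseteq> UNIV \<and> length xs = n}" by (auto simp: cube_def)
  thus ?thesis using card_lists_length_eq[of "UNIV::bool set" n] by simp
qed

lemma walsh_alt: "walsh n f a = (\<Sum>x\<in>cube n. s (f x) * s (ip x a)) / 2 ^ n"
  unfolding walsh_def by (rule arg_cong[where f="\<lambda>x. x / _"], rule sum.cong) (auto simp: s_def)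

lemma sum_cube_add:
  "(\<Sum>x\<in>cube (m+n). \<phi> x) = (\<Sum>a\<in>cube m. \<Sum>b\<in>cube n. \<phi> (a @ b))"
proof -
  have bij: "bij_betw (\<lambda>(a,b). a @ b) (cube m \<times> cube n) (cube (m+n))"
    by (rule bij_betw_byWitness[where f'="\<lambda>x. (take m x, drop m x)"]) (auto simp: cube_def)
  have "(\<Sum>x\<in>cube (m+n). \<phi> x) = (\<Sum>p\<in>cube m \<times> cube n. \<phi> ((\<lambda>(a,b). a @ b) p))"
    using sum.reindex_bij_betw[OF bij, of \<phi>] by simp
  also have "\<dots> = (\<Sum>(a,b)\<in>cube m \<times> cube n. \<phi> (a @ b))"
    by (rule sum.cong) auto
  also have "\<dots> = (\<Sum>a\<in>cube m. \<Sum>b\<in>cube n. \<phi> (a @ b))"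
    by (simp add: sum.cartesian_product)
  finally show ?thesis .
qed

lemma sum_cube_Suc:
  "(\<Sum>x\<in>cube (Suc n). \<phi> x) = (\<Sum>b\<in>cube n. \<phi> (True # b)) + (\<Sum>b\<in>cube n. \<phi> (False # b))"
proof -
  have "(\<Sum>x\<in>cube (Suc n). \<phi> x) = (\<Sum>a\<in>cube 1. \<Sum>b\<in>cube n. \<phi> (a @ b))"
    using sum_cube_add[where m=1 and n=n and \<phi>=\<phi>] by simp
  moreover have "cube 1 = {[True],[False]}"
    by (auto simp: cube_def length_Suc_conv)
  ultimately show ?thesis by simp
qed

lemma ip_Cons[simp]: "ip (b # x) (c # a) = ((b \<and> c) \<noteq> ip x a)"
  by (cases b; cases c) (simp_all add: ip_def)
lemma ip_Nil[simp]: "ip [] a = False" "ip x [] = False"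
  by (simp_all add: ip_def)

lemma ip_append: "length a = length c \<Longrightarrow> ip (a @ b) (c @ d) = (ip a c \<noteq> ip b d)"
  by (induction a c rule: list_induct2) auto

lemma ip_sym: "ip x a = ip a x"
proof (induction x arbitrary: a)
  case Nil thus ?case by simp
next
  case (Cons b x) thus ?case by (cases a) auto
qed

lemma char_sum: "a \<in> cube n \<Longrightarrow>
  (\<Sum>x\<in>cube n. s (ip x a)) = (if a = replicate n False then 2 ^ n else 0)"
proof (induction n arbitrary: a)
  case 0 thus ?case by (simp add: cube_def s_def)
next
  case (Suc n)
  then obtain c a' where a: "a = c # a'" "a' \<in> cube n" by (auto simp: cube_def length_Suc_conv)
  show ?case using Suc.IH[OF a(2)] a
    by (cases c) (auto simp: sum_cube_Suc s_xor sum_negf)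
qed

definition blocks :: "nat \<Rightarrow> nat \<Rightarrow> bool list \<Rightarrow> bool list list" where
  "blocks L k x = map (\<lambda>i. take L (drop (i * L) x)) [0..<k]"

lemma dcomp_blocks: "dcomp k L f h x = f (map h (blocks L k x))"
  by (simp add: dcomp_def blocks_def comp_def)

lemma blocks_append: "length a = L \<Longrightarrow> blocks L (Suc k) (a @ b) = a # blocks L k b"
  by (simp add: blocks_def upt_conv_Cons map_Suc_upt[symmetric] del: upt_Suc)

lemma length_blocks[simp]: "length (blocks L k x) = k" by (simp add: blocks_def)

lemma blocks_nth_cube: "x \<in> cube (k * L) \<Longrightarrow> i < k \<Longrightarrow> blocks L k x ! i \<in> cube L"
proof -
  assume "x \<in> cube (k * L)" "i < k"
  moreover have "i * L + L \<le> k * L" using \<open>i < k\<close>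
    by (metis add.commute mult_Suc mult_le_mono1 Suc_leI)
  ultimately show ?thesis by (auto simp: blocks_def cube_def)
qed

definition Cs :: "(bool list \<Rightarrow> bool) \<Rightarrow> nat \<Rightarrow> (bool list \<Rightarrow> real) \<Rightarrow> bool \<Rightarrow> real" where
  "Cs h L g b = (\<Sum>z\<in>{z\<in>cube L. h z = b}. g z)"

lemma sum_split_h: "finite A \<Longrightarrow> (\<Sum>a\<in>A. \<phi> (h a) a) = (\<Sum>a\<in>{a\<in>A. h a = True}. \<phi> True a) + (\<Sum>a\<in>{a\<in>A. h a = False}. \<phi> False a)"
proof -
  assume fin: "finite A"
  have "(\<Sum>a\<in>A. \<phi> (h a) a) = (\<Sum>a\<in>{a\<in>A. h a}. \<phi> (h a) a) + (\<Sum>a\<in>{a\<in>A. \<not> h a}. \<phi> (h a) a)"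
    using fin by (subst sum.union_disjoint[symmetric]) (auto intro: sum.cong)
  also have "\<dots> = (\<Sum>a\<in>{a\<in>A. h a = True}. \<phi> True a) + (\<Sum>a\<in>{a\<in>A. h a = False}. \<phi> False a)"
    by (intro arg_cong2[where f="(+)"] sum.cong) auto
  finally show ?thesis .
qed

lemma main_sum:
  "(\<Sum>x\<in>cube (k * L). F (map h (blocks L k x)) * (\<Prod>i<k. G i (blocks L k x ! i)))
   = (\<Sum>y\<in>cube k. F y * (\<Prod>i<k. Cs h L (G i) (y ! i)))"
proof (induction k arbitrary: F G)
  case 0
  have "cube 0 = {[]}" by (auto simp: cube_def)
  thus ?case by (simp add: blocks_def)
next
  case (Suc k)
  have "(\<Sum>x\<in>cube (Suc k * L). F (map h (blocks L (Suc k) x)) * (\<Prod>i<Suc k. G i (blocks L (Suc k) x ! i)))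
    = (\<Sum>a\<in>cube L. \<Sum>b\<in>cube (k*L). F (map h (blocks L (Suc k) (a @ b))) * (\<Prod>i<Suc k. G i (blocks L (Suc k) (a @ b) ! i)))"
    using sum_cube_add[where m=L and n="k*L"] by simp
  also have "\<dots> = (\<Sum>a\<in>cube L. G 0 a * (\<Sum>b\<in>cube (k*L). F (h a # map h (blocks L k b)) * (\<Prod>i<k. G (Suc i) (blocks L k b ! i))))"
    by (rule sum.cong[OF refl]) (auto simp: blocks_append cube_def prod.lessThan_Suc_shift sum_distrib_left ac_simps simp del: prod.lessThan_Suc)
  also have "\<dots> = (\<Sum>a\<in>cube L. G 0 a * (\<Sum>y\<in>cube k. F (h a # y) * (\<Prod>i<k. Cs h L (G (Suc i)) (y ! i))))"
  proof (rule sum.cong[OF refl])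
    fix a show "G 0 a * (\<Sum>b\<in>cube (k*L). F (h a # map h (blocks L k b)) * (\<Prod>i<k. G (Suc i) (blocks L k b ! i))) = G 0 a * (\<Sum>y\<in>cube k. F (h a # y) * (\<Prod>i<k. Cs h L (G (Suc i)) (y ! i)))"
      using Suc.IH[where F="\<lambda>y. F (h a # y)" and G="\<lambda>i. G (Suc i)"] by simp
  qed
  also have "\<dots> = (\<Sum>y\<in>cube k. \<Sum>a\<in>cube L. G 0 a * F (h a # y) * (\<Prod>i<k. Cs h L (G (Suc i)) (y ! i)))"
    by (simp add: sum_distrib_left sum.swap[of _ "cube L"] ac_simps)
  also have "\<dots> = (\<Sum>y\<in>cube k. F (True # y) * (\<Prod>i<Suc k. Cs h L (G i) ((True # y) ! i))
                     + F (False # y) * (\<Prod>i<Suc k. Cs h L (G i) ((False # y) ! i)))"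
  proof (rule sum.cong[OF refl])
    fix y
    show "(\<Sum>a\<in>cube L. G 0 a * F (h a # y) * (\<Prod>i<k. Cs h L (G (Suc i)) (y ! i))) =
         F (True # y) * (\<Prod>i<Suc k. Cs h L (G i) ((True # y) ! i)) +
         F (False # y) * (\<Prod>i<Suc k. Cs h L (G i) ((False # y) ! i))"
      using sum_split_h[OF finite_cube, where \<phi>="\<lambda>b a. G 0 a * F (b # y) * (\<Prod>i<k. Cs h L (G (Suc i)) (y ! i))" and h=h]
      by (simp add: prod.lessThan_Suc_shift Cs_def sum_distrib_left sum_distrib_right ac_simps del: prod.lessThan_Suc)
  qed
  also have "\<dots> = (\<Sum>y\<in>cube (Suc k). F y * (\<Prod>i<Suc k. Cs h L (G i) (y ! i)))"
    by (simp add: sum_cube_Suc sum.distrib)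
  finally show ?case .
qed

lemma s_eq_not: "s (a = (\<not> b)) = s a * s b" by (auto simp: s_def)

lemma ip_blocks: "x \<in> cube (k * L) \<Longrightarrow> a \<in> cube (k * L) \<Longrightarrow>
  s (ip x a) = (\<Prod>i<k. s (ip (blocks L k x ! i) (blocks L k a ! i)))"
proof (induction k arbitrary: x a)
  case 0 thus ?case by (simp add: cube_def s_def)
next
  case (Suc k)
  have x: "x = take L x @ drop L x" and a: "a = take L a @ drop L a" by simp_all
  have l: "length (take L x) = L" "length (take L a) = L" "drop L x \<in> cube (k*L)" "drop L a \<in> cube (k*L)"
    using Suc.prems by (auto simp: cube_def)
  have "s (ip x a) = s (ip (take L x) (take L a)) * s (ip (drop L x) (drop L a))"
    using ip_append[of "take L x" "take L a" "drop L x" "drop L a"] l x a by (simp add: s_eq_not)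
  also have "\<dots> = (\<Prod>i<Suc k. s (ip (blocks L (Suc k) x ! i) (blocks L (Suc k) a ! i)))"
    using Suc.IH[OF l(3,4)] blocks_append[OF l(1), of k "drop L x"] blocks_append[OF l(2), of k "drop L a"]
    by (simp add: prod.lessThan_Suc_shift del: prod.lessThan_Suc)
  finally show ?case .
qed

lemma ip_prod: "length y = length b \<Longrightarrow> s (ip y b) = (\<Prod>i<length b. if b ! i then s (y ! i) else 1)"
proof (induction y b rule: list_induct2)
  case Nil thus ?case by (simp add: s_def)
next
  case (Cons x xs y ys)
  have 1: "s (ip (x#xs) (y#ys)) = (if y then s x else 1) * s (ip xs ys)" by (auto simp: s_def)
  have 2: "(\<Prod>i<Suc (length ys). if (y#ys)!i then s((x#xs)!i) else 1) = (if y then s x else 1) * (\<Prod>i<length ys. if ys!i then s(xs!i) else 1)"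
    by (subst prod.lessThan_Suc_shift) (simp cong: if_cong)
  show ?case using 1 2 Cons.IH by simp
qed

lemma Cs_ip: assumes "a \<in> cube L"
  shows "Cs h L (\<lambda>z. s (ip z a)) b = 2 ^ L / 2 * ((if a = replicate L False then 1 else 0) + s b * walsh L h a)"
proof -
  let ?T = "(\<Sum>z\<in>{z\<in>cube L. h z = True}. s (ip z a))"
  let ?F = "(\<Sum>z\<in>{z\<in>cube L. h z = False}. s (ip z a))"
  have 1: "?T + ?F = (if a = replicate L False then 2 ^ L else 0)"
    using sum_split_h[OF finite_cube, where \<phi>="\<lambda>b z. s (ip z a)" and h=h] char_sum[OF assms] by simp
  have "walsh L h a * 2 ^ L = (\<Sum>z\<in>cube L. s (h z) * s (ip z a))" by (simp add: walsh_alt)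
  also have "\<dots> = ?F - ?T"
    using sum_split_h[OF finite_cube, where \<phi>="\<lambda>b z. s b * s (ip z a)" and h=h] by (simp add: s_def sum_negf)
  finally have 2: "walsh L h a * 2 ^ L = ?F - ?T" .
  show ?thesis
    using 1 2 by (cases b) (auto simp: Cs_def s_def field_simps)
qed

lemma walsh_dcomp:
  assumes hbal: "walsh L h (replicate L False) = 0" and a: "a \<in> cube (k * L)"
  defines "as \<equiv> blocks L k a"
  defines "\<beta> \<equiv> map (\<lambda>c. c \<noteq> replicate L False) as"
  shows "walsh (k * L) (dcomp k L f h) a = walsh k f \<beta> * (\<Prod>i<k. if \<beta> ! i then walsh L h (as ! i) else 1)"
proof -
  have asc: "\<And>i. i < k \<Longrightarrow> as ! i \<in> cube L" using blocks_nth_cube[OF a] by (simp add: as_def)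
  have "walsh (k * L) (dcomp k L f h) a * 2 ^ (k * L)
      = (\<Sum>x\<in>cube (k * L). s (f (map h (blocks L k x))) * (\<Prod>i<k. s (ip (blocks L k x ! i) (as ! i))))"
    by (simp add: walsh_alt dcomp_blocks as_def) (rule sum.cong[OF refl], simp add: ip_blocks[OF _ a])
  also have "\<dots> = (\<Sum>y\<in>cube k. s (f y) * (\<Prod>i<k. Cs h L (\<lambda>z. s (ip z (as ! i))) (y ! i)))"
    by (rule main_sum)
  also have "\<dots> = (\<Sum>y\<in>cube k. s (f y) * ((2 ^ L / 2) ^ k * (s (ip y \<beta>) * (\<Prod>i<k. if \<beta> ! i then walsh L h (as ! i) else 1))))"
  proof (rule sum.cong[OF refl])
    fix y assume y: "y \<in> cube k"
    have "(\<Prod>i<k. Cs h L (\<lambda>z. s (ip z (as ! i))) (y ! i)) = (\<Prod>i<k. (2 ^ L / 2) * ((if \<beta> ! i then s (y ! i) else 1) * (if \<beta> ! i then walsh L h (as ! i) else 1)))"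
      by (rule prod.cong[OF refl]) (auto simp: Cs_ip[OF asc[unfolded as_def]] \<beta>_def as_def hbal)
    also have "\<dots> = (2 ^ L / 2) ^ k * ((\<Prod>i<k. if \<beta> ! i then s (y ! i) else 1) * (\<Prod>i<k. if \<beta> ! i then walsh L h (as ! i) else 1))"
      by (simp only: prod.distrib prod_constant card_lessThan)
    also have "\<dots> = (2 ^ L / 2) ^ k * (s (ip y \<beta>) * (\<Prod>i<k. if \<beta> ! i then walsh L h (as ! i) else 1))"
      using y ip_prod[of y \<beta>] by (simp add: \<beta>_def as_def cube_def)
    finally show "s (f y) * (\<Prod>i<k. Cs h L (\<lambda>z. s (ip z (as ! i))) (y ! i)) = s (f y) * ((2 ^ L / 2) ^ k * (s (ip y \<beta>) * (\<Prod>i<k. if \<beta> ! i then walsh L h (as ! i) else 1)))" by simp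
  qed
  also have "\<dots> = (2 ^ L / 2) ^ k * (\<Sum>y\<in>cube k. s (f y) * s (ip y \<beta>)) * (\<Prod>i<k. if \<beta> ! i then walsh L h (as ! i) else 1)"
    by (simp add: sum_distrib_left sum_distrib_right ac_simps)
  also have "\<dots> = (2 ^ L / 2) ^ k * 2 ^ k * walsh k f \<beta> * (\<Prod>i<k. if \<beta> ! i then walsh L h (as ! i) else 1)"
    by (simp add: walsh_alt)
  also have "(2 ^ L / 2) ^ k * 2 ^ k = (2::real) ^ (k * L)"
    by (simp add: power_divide power_mult[symmetric] mult.commute)
  finally show ?thesis by simp
qed

lemma ip_zero[simp]: "ip x (replicate m False) = False"
proof (induction x arbitrary: m)
  case Nil thus ?case by simp
next
  case (Cons b x) thus ?case by (cases m) auto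
qed

lemma s_False[simp]: "s False = 1" and s_True[simp]: "s True = -1" by (simp_all add: s_def)

lemma sum_s_card: "finite A \<Longrightarrow> (\<Sum>x\<in>A. s (f x)) = real (card {x\<in>A. f x = False}) - real (card {x\<in>A. f x = True})"
  using sum_split_h[where \<phi>="\<lambda>b x. s b" and h=f and A=A] by (simp add: s_def)

lemma balanced_walsh: "balanced n f \<longleftrightarrow> walsh n f (replicate n False) = 0"
proof -
  have c: "card {x\<in>cube n. f x = False} + card {x\<in>cube n. f x = True} = 2 ^ n"
    using card_Un_disjoint[of "{x\<in>cube n. f x = False}" "{x\<in>cube n. f x = True}"] card_cube[of n]
  proof -
    have u: "{x\<in>cube n. f x = False} \<union> {x\<in>cube n. f x = True} = cube n" by auto
    have d: "{x\<in>cube n. f x = False} \<inter> {x\<in>cube n. f x = True} = {}" by auto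
    have "card ({x\<in>cube n. f x = False} \<union> {x\<in>cube n. f x = True}) = card {x\<in>cube n. f x = False} + card {x\<in>cube n. f x = True}"
      by (rule card_Un_disjoint) (use d in auto)
    thus ?thesis using u card_cube[of n] by simp
  qed
  have "walsh n f (replicate n False) = (\<Sum>x\<in>cube n. s (f x)) / 2 ^ n"
    by (simp add: walsh_alt)
  also have "\<dots> = (real (card {x\<in>cube n. f x = False}) - real (card {x\<in>cube n. f x = True})) / 2 ^ n"
    by (simp add: sum_s_card)
  finally have w: "walsh n f (replicate n False) = (real (card {x\<in>cube n. f x = False}) - real (card {x\<in>cube n. f x = True})) / 2 ^ n" .
  have c': "{x \<in> cube n. f x} = {x\<in>cube n. f x = True}" by simp
  have e: "(real (card {x\<in>cube n. f x = False}) - real (card {x\<in>cube n. f x = True})) / 2 ^ n = 0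
     \<longleftrightarrow> card {x\<in>cube n. f x = False} = card {x\<in>cube n. f x = True}" by simp
  show ?thesis unfolding balanced_def w c' e using c by linarith
qed

definition ind :: "bool \<Rightarrow> real" where "ind b = (if b then 1 else 0)"

lemma card_ind: "finite A \<Longrightarrow> real (card {x\<in>A. P x}) = (\<Sum>x\<in>A. ind (P x))"
  by (simp add: ind_def sum.If_cases Int_def)

lemma length_flip[simp]: "length (flip x i) = length x" by (simp add: flip_def)

lemma flip_flip: "r < length z \<Longrightarrow> flip (flip z r) r = z" by (simp add: flip_def)

lemma blocks_flip:
  assumes x: "x \<in> cube (k * L)" and i: "i < k" and r: "r < L"
  shows "blocks L k (flip x (i * L + r)) = (blocks L k x)[i := flip (blocks L k x ! i) r]"
proof (rule nth_equalityI)
  show "length (blocks L k (flip x (i * L + r))) = length ((blocks L k x)[i := flip (blocks L k x ! i) r])" by simp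
next
  fix i' assume "i' < length (blocks L k (flip x (i * L + r)))"
  hence i': "i' < k" by simp
  have lx: "length x = k * L" using x by (simp add: cube_def)
  have iL: "i * L + L \<le> k * L" using i by (metis add.commute mult_Suc mult_le_mono1 Suc_leI)
  have i'L: "i' * L + L \<le> k * L" using i' by (metis add.commute mult_Suc mult_le_mono1 Suc_leI)
  let ?v = "\<not> x ! (i * L + r)"
  show "blocks L k (flip x (i * L + r)) ! i' = (blocks L k x)[i := flip (blocks L k x ! i) r] ! i'"
  proof (cases "i' = i")
    case True
    have "take L (drop (i * L) (x[i * L + r := ?v])) = (take L (drop (i * L) x))[r := ?v]"
      by (simp add: drop_update_swap take_update_swap)
    moreover have "take L (drop (i * L) x) ! r = x ! (i * L + r)"
    proof -
      have "i * L \<le> length x" using iL lx by linarith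
      thus ?thesis using r nth_drop[of "i * L" x r] by simp
    qed
    ultimately show ?thesis using True i by (simp add: blocks_def flip_def)
  next
    case False
    show ?thesis
    proof (cases "i' < i")
      case True
      hence "i' * L + L \<le> i * L" by (metis add.commute mult_Suc mult_le_mono1 Suc_leI)
      hence "take L (drop (i' * L) (x[i * L + r := ?v])) = take L (drop (i' * L) x)"
        by (simp add: drop_update_swap)
      thus ?thesis using False i i' by (simp add: blocks_def flip_def)
    next
      case False2: False
      hence "i * L + r < i' * L"
      proof -
        have "Suc i \<le> i'" using False2 False by simp
        hence "Suc i * L \<le> i' * L" by (rule mult_le_mono1)
        thus ?thesis using r by simp
      qed
      hence "take L (drop (i' * L) (x[i * L + r := ?v])) = take L (drop (i' * L) x)"
        by simp
      thus ?thesis using False i i' by (simp add: blocks_def flip_def)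
    qed
  qed
qed

lemma pair_count:
  fixes h :: "bool list \<Rightarrow> bool"
  assumes r: "r < L"
  shows "real (card {z\<in>cube L. h z = b \<and> h z \<noteq> h (flip z r)}) = real (card {z\<in>cube L. h z \<noteq> h (flip z r)}) / 2"
proof -
  let ?D = "\<lambda>b. {z\<in>cube L. h z = b \<and> h z \<noteq> h (flip z r)}"
  have bij: "bij_betw (\<lambda>z. flip z r) (?D True) (?D False)"
    by (rule bij_betw_byWitness[where f'="\<lambda>z. flip z r"]) (use r in \<open>auto simp: cube_def flip_flip\<close>)
  have eq: "card (?D True) = card (?D False)" using bij_betw_same_card[OF bij] .
  have u: "{z\<in>cube L. h z \<noteq> h (flip z r)} = ?D True \<union> ?D False" by auto
  have "card {z\<in>cube L. h z \<noteq> h (flip z r)} = card (?D True) + card (?D False)"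
    unfolding u by (rule card_Un_disjoint) auto
  thus ?thesis using eq by (cases b) auto
qed

lemma half_count:
  fixes h :: "bool list \<Rightarrow> bool"
  assumes "balanced L h"
  shows "real (card {z\<in>cube L. h z = b}) = 2 ^ L / 2"
proof -
  have u: "cube L = {z\<in>cube L. h z = True} \<union> {z\<in>cube L. h z = False}" by auto
  have "card (cube L) = card {z\<in>cube L. h z = True} + card {z\<in>cube L. h z = False}"
    by (subst u, rule card_Un_disjoint) auto
  moreover have "2 * card {z\<in>cube L. h z = True} = 2 ^ L" using assms by (simp add: balanced_def)
  ultimately have e1: "card {z\<in>cube L. h z = True} = card {z\<in>cube L. h z = False}" and e2: "2 * card {z\<in>cube L. h z = True} = 2 ^ L"
    by (simp_all add: card_cube)
  have "real (2 * card {z\<in>cube L. h z = True}) = real (2 ^ L)" using e2 by (rule arg_cong)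
  hence r: "2 * real (card {z\<in>cube L. h z = True}) = 2 ^ L" by simp
  have "real (card {z\<in>cube L. h z = True}) = 2 ^ L / 2" "real (card {z\<in>cube L. h z = False}) = 2 ^ L / 2"
    using r e1 by simp_all
  thus ?thesis by (cases b) auto
qed

lemma card_flip_comp:
  assumes hb: "balanced L h" and i: "i < k" and r: "r < L"
  shows "real (card {x\<in>cube (k*L). dcomp k L f h x \<noteq> dcomp k L f h (flip x (i*L+r))}) / 2 ^ (k*L)
    = (real (card {y\<in>cube k. f y \<noteq> f (flip y i)}) / 2 ^ k) * (real (card {z\<in>cube L. h z \<noteq> h (flip z r)}) / 2 ^ L)"
proof -
  define G where "G = (\<lambda>i' z. if i' = i then ind (h z \<noteq> h (flip z r)) else 1)"
  define c where "c = real (card {z\<in>cube L. h z \<noteq> h (flip z r)})"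
  have pw: "ind (dcomp k L f h x \<noteq> dcomp k L f h (flip x (i*L+r)))
      = ind (f (map h (blocks L k x)) \<noteq> f (flip (map h (blocks L k x)) i)) * (\<Prod>i'<k. G i' (blocks L k x ! i'))"
    if x: "x \<in> cube (k*L)" for x
  proof -
    let ?bs = "blocks L k x"
    let ?z = "?bs ! i"
    have pr: "(\<Prod>i'<k. G i' (?bs ! i')) = ind (h ?z \<noteq> h (flip ?z r))"
      using i by (simp add: G_def prod.delta)
    have "map h (blocks L k (flip x (i*L+r))) = (map h ?bs)[i := h (flip ?z r)]"
      by (simp add: blocks_flip[OF x i r] map_update)
    moreover have "flip (map h ?bs) i = (map h ?bs)[i := \<not> h ?z]"
      using i by (simp add: flip_def)
    moreover have idl: "(map h ?bs)[i := h ?z] = map h ?bs" using i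
      by (metis length_blocks length_map list_update_id nth_map)
    ultimately show ?thesis unfolding pr dcomp_blocks
      by (cases "h ?z = h (flip ?z r)") (auto simp: ind_def)
  qed
  have "real (card {x\<in>cube (k*L). dcomp k L f h x \<noteq> dcomp k L f h (flip x (i*L+r))})
     = (\<Sum>x\<in>cube (k*L). ind (f (map h (blocks L k x)) \<noteq> f (flip (map h (blocks L k x)) i)) * (\<Prod>i'<k. G i' (blocks L k x ! i')))"
    by (simp only: card_ind[OF finite_cube]) (rule sum.cong[OF refl], rule pw)
  also have "\<dots> = (\<Sum>y\<in>cube k. ind (f y \<noteq> f (flip y i)) * (\<Prod>i'<k. Cs h L (G i') (y ! i')))"
    by (rule main_sum[where F="\<lambda>y. ind (f y \<noteq> f (flip y i))"])
  also have "\<dots> = (\<Sum>y\<in>cube k. ind (f y \<noteq> f (flip y i)) * (c / 2 * (2 ^ L / 2) ^ (k - 1)))"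
  proof (rule sum.cong[OF refl])
    fix y
    have "(\<Prod>i'<k. Cs h L (G i') (y ! i')) = Cs h L (G i) (y ! i) * (\<Prod>i'\<in>{..<k} - {i}. Cs h L (G i') (y ! i'))"
      using i by (simp add: prod.remove)
    also have "(\<Prod>i'\<in>{..<k} - {i}. Cs h L (G i') (y ! i')) = (\<Prod>i'\<in>{..<k} - {i}. 2 ^ L / 2)"
      by (rule prod.cong[OF refl]) (auto simp: G_def Cs_def half_count[OF hb])
    also have "\<dots> = (2 ^ L / 2) ^ (k - 1)" using i by simp
    also have "Cs h L (G i) (y ! i) = c / 2"
    proof -
      have "Cs h L (G i) (y ! i) = (\<Sum>z\<in>{z\<in>cube L. h z = y ! i}. ind (h z \<noteq> h (flip z r)))"
        by (simp add: Cs_def G_def)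
      also have "\<dots> = real (card {z\<in>{z\<in>cube L. h z = y ! i}. h z \<noteq> h (flip z r)})"
        by (rule card_ind[symmetric]) simp
      also have "{z\<in>{z\<in>cube L. h z = y ! i}. h z \<noteq> h (flip z r)} = {z\<in>cube L. h z = y ! i \<and> h z \<noteq> h (flip z r)}" by auto
      finally show ?thesis using pair_count[OF r, of h "y ! i"] by (simp add: c_def)
    qed
    finally show "ind (f y \<noteq> f (flip y i)) * (\<Prod>i'<k. Cs h L (G i') (y ! i')) = ind (f y \<noteq> f (flip y i)) * (c / 2 * (2 ^ L / 2) ^ (k - 1))" by simp
  qed
  also have "\<dots> = real (card {y\<in>cube k. f y \<noteq> f (flip y i)}) * (c / 2 * (2 ^ L / 2) ^ (k - 1))"
    by (simp add: card_ind sum_distrib_right)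
  finally have 1: "real (card {x\<in>cube (k*L). dcomp k L f h x \<noteq> dcomp k L f h (flip x (i*L+r))}) = real (card {y\<in>cube k. f y \<noteq> f (flip y i)}) * (c / 2 * (2 ^ L / 2) ^ (k - 1))" .
  obtain k' where k: "k = Suc k'" using i by (cases k) auto
  have a: "(2 ^ L / 2) ^ k' * 2 ^ k' = (2::real) ^ (L * k')" by (simp add: power_divide power_mult)
  have b: "(2::real) ^ (k * L) = 2 ^ L * 2 ^ (L * k')" unfolding k by (simp add: power_add mult.commute)
  have "(2::real) ^ (k * L) * 2 = 2 ^ k * 2 ^ L * (2 ^ L / 2) ^ (k - 1)"
    unfolding b unfolding k using a by (simp add: field_simps)
  thus ?thesis unfolding 1 c_def[symmetric] by (simp add: field_simps)
qed

lemma influence_dcomp: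
  assumes hb: "balanced L h"
  shows "influence (k * L) (dcomp k L f h) = influence k f * influence L h"
proof -
  have "influence (k * L) (dcomp k L f h) = (\<Sum>i<k. \<Sum>j\<in>{i*L..<i*L+L}. real (card {x\<in>cube (k*L). dcomp k L f h x \<noteq> dcomp k L f h (flip x j)}) / 2 ^ (k*L))"
    unfolding influence_def by (rule sum.nat_group[symmetric])
  also have "\<dots> = (\<Sum>i<k. \<Sum>r<L. real (card {x\<in>cube (k*L). dcomp k L f h x \<noteq> dcomp k L f h (flip x (i*L+r))}) / 2 ^ (k*L))"
  proof (rule sum.cong[OF refl])
    fix i
    show "(\<Sum>j\<in>{i*L..<i*L+L}. real (card {x\<in>cube (k*L). dcomp k L f h x \<noteq> dcomp k L f h (flip x j)}) / 2 ^ (k*L))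
      = (\<Sum>r<L. real (card {x\<in>cube (k*L). dcomp k L f h x \<noteq> dcomp k L f h (flip x (i*L+r))}) / 2 ^ (k*L))"
      using sum.shift_bounds_nat_ivl[of "\<lambda>j. real (card {x\<in>cube (k*L). dcomp k L f h x \<noteq> dcomp k L f h (flip x j)}) / 2 ^ (k*L)" 0 "i*L" L]
      by (simp add: atLeast0LessThan add.commute)
  qed
  also have "\<dots> = (\<Sum>i<k. \<Sum>r<L. (real (card {y\<in>cube k. f y \<noteq> f (flip y i)}) / 2 ^ k) * (real (card {z\<in>cube L. h z \<noteq> h (flip z r)}) / 2 ^ L))"
    by (intro sum.cong refl card_flip_comp[OF hb]) auto
  also have "\<dots> = influence k f * influence L h"
    unfolding influence_def by (simp add: sum_product)
  finally show ?thesis .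
qed

lemma walsh_sq_le1: "(walsh n f a)^2 \<le> 1"
proof -
  have "\<bar>\<Sum>x\<in>cube n. s (f x) * s (ip x a)\<bar> \<le> (\<Sum>x\<in>cube n. \<bar>s (f x) * s (ip x a)\<bar>)"
    by (rule sum_abs)
  also have "\<dots> = 2 ^ n" by (simp add: abs_mult card_cube)
  finally have "\<bar>walsh n f a\<bar> \<le> 1" by (simp add: walsh_alt abs_divide)
  thus ?thesis by (simp add: abs_square_le_1)
qed

lemma sum_walsh: "(\<Sum>a\<in>cube n. walsh n f a) = s (f (replicate n False))"
proof -
  have i1: "(\<Sum>a\<in>cube n. \<Sum>x\<in>cube n. s (f x) * s (ip x a)) = (\<Sum>x\<in>cube n. \<Sum>a\<in>cube n. s (f x) * s (ip a x))"
    by (subst sum.swap) (simp only: ip_sym)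
  have i2: "(\<Sum>x\<in>cube n. \<Sum>a\<in>cube n. s (f x) * s (ip a x)) = (\<Sum>x\<in>cube n. if x = replicate n False then s (f x) * 2 ^ n else 0)"
    by (rule sum.cong[OF refl]) (simp add: sum_distrib_left[symmetric] char_sum)
  have "(\<Sum>a\<in>cube n. walsh n f a) = (\<Sum>a\<in>cube n. \<Sum>x\<in>cube n. s (f x) * s (ip x a)) / 2 ^ n"
    by (simp only: walsh_alt sum_divide_distrib[symmetric])
  also have "\<dots> = (\<Sum>x\<in>cube n. if x = replicate n False then s (f x) * 2 ^ n else 0) / 2 ^ n"
    by (simp only: i1 i2)
  also have "\<dots> = s (f (replicate n False))"
  proof -
    have "replicate n False \<in> cube n" by (simp add: cube_def)
    thus ?thesis by (simp add: sum.delta)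
  qed
  finally show ?thesis .
qed

lemma exists_walsh_nonzero: "\<exists>a\<in>cube n. walsh n f a \<noteq> 0"
proof (rule ccontr)
  assume "\<not> ?thesis"
  hence "(\<Sum>a\<in>cube n. walsh n f a) = 0" by simp
  thus False using sum_walsh[of n f] by (simp add: s_def split: if_splits)
qed

lemma min_entropy_eq:
  assumes "M > 0" "\<forall>a\<in>cube n. (walsh n f a)^2 \<le> M" "a0 \<in> cube n" "(walsh n f a0)^2 = M"
  shows "min_entropy n f = log 2 (1 / M)"
  unfolding min_entropy_def
proof (rule Min_eqI)
  have "{log 2 (1 / (walsh n f a)\<^sup>2) |a. a \<in> cube n \<and> (walsh n f a)\<^sup>2 \<noteq> 0} \<subseteq> (\<lambda>a. log 2 (1 / (walsh n f a)\<^sup>2)) ` cube n" by auto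
  then show "finite {log 2 (1 / (walsh n f a)\<^sup>2) |a. a \<in> cube n \<and> (walsh n f a)\<^sup>2 \<noteq> 0}"
    by (rule finite_subset) simp
next
  fix y assume "y \<in> {log 2 (1 / (walsh n f a)\<^sup>2) |a. a \<in> cube n \<and> (walsh n f a)\<^sup>2 \<noteq> 0}"
  then obtain a where a: "a \<in> cube n" "(walsh n f a)\<^sup>2 \<noteq> 0" "y = log 2 (1 / (walsh n f a)\<^sup>2)" by auto
  have p: "(walsh n f a)\<^sup>2 > 0" using a(2) by (simp add: less_le)
  have "1 / M \<le> 1 / (walsh n f a)\<^sup>2" using assms(2) a(1) p by (simp add: frac_le)
  thus "log 2 (1 / M) \<le> y" unfolding a(3) using p assms(1) by simp
next
  show "log 2 (1 / M) \<in> {log 2 (1 / (walsh n f a)\<^sup>2) |a. a \<in> cube n \<and> (walsh n f a)\<^sup>2 \<noteq> 0}"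
    using assms(1,3,4) by (intro CollectI exI[of _ a0]) simp
qed

lemma blocks_zero: "i < k \<Longrightarrow> blocks L k (replicate (k*L) False) ! i = replicate L False"
proof -
  assume i: "i < k"
  have "i * L + L \<le> k * L" using i by (metis add.commute mult_Suc mult_le_mono1 Suc_leI)
  hence "min L (k * L - i * L) = L" by simp
  thus ?thesis using i by (simp add: blocks_def)
qed

lemma blocks_concat: "(\<forall>z\<in>set zs. length z = L) \<Longrightarrow> blocks L (length zs) (concat zs) = zs"
proof (induction zs)
  case Nil thus ?case by (simp add: blocks_def)
next
  case (Cons a zs) thus ?case by (simp add: blocks_append)
qed

lemma length_concat_const: "(\<forall>z\<in>set zs. length z = L) \<Longrightarrow> length (concat zs) = length zs * L"
  by (induction zs) auto

lemma wt_one: assumes "wt \<beta> = 1" shows "\<exists>i0<length \<beta>. \<forall>i<length \<beta>. \<beta> ! i \<longleftrightarrow> i = i0"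
proof -
  have "card {i. i < length \<beta> \<and> \<beta> ! i} = 1" using assms by (simp add: wt_def length_filter_conv_card)
  then obtain i0 where "{i. i < length \<beta> \<and> \<beta> ! i} = {i0}" by (rule card_1_singletonE)
  thus ?thesis by (metis (mono_tags, lifting) insertI1 mem_Collect_eq singletonD)
qed

lemma dcomp_balanced:
  assumes "balanced k f" "balanced L h"
  shows "balanced (k*L) (dcomp k L f h)"
proof -
  have z: "replicate (k*L) False \<in> cube (k*L)" by (simp add: cube_def)
  have hb: "walsh L h (replicate L False) = 0" using assms(2) by (simp add: balanced_walsh)
  have "map (\<lambda>c. c \<noteq> replicate L False) (blocks L k (replicate (k*L) False)) = replicate k False"
    by (rule nth_equalityI) (simp_all add: blocks_zero)
  moreover have "walsh k f (replicate k False) = 0" using assms(1) by (simp add: balanced_walsh)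
  ultimately have "walsh (k*L) (dcomp k L f h) (replicate (k*L) False) = 0"
    using walsh_dcomp[OF hb z, of f] by simp
  thus ?thesis by (simp add: balanced_walsh)
qed

lemma step_bound:
  assumes gb: "balanced l g" and hb: "balanced L h"
    and gmax: "\<forall>v\<in>cube l. (walsh l g v)^2 \<le> Mg"
    and hmax: "\<forall>a\<in>cube L. (walsh L h a)^2 \<le> Mh" and Mh: "Mh > 0"
    and a: "a \<in> cube (l*L)"
  shows "(walsh (l*L) (dcomp l L g h) a)^2 \<le> Mg * Mh"
proof -
  define as where "as = blocks L l a"
  define \<beta>' where "\<beta>' = map (\<lambda>c. c \<noteq> replicate L False) as"
  have hz: "walsh L h (replicate L False) = 0" using hb by (simp add: balanced_walsh)
  have W: "walsh (l*L) (dcomp l L g h) a = walsh l g \<beta>' * (\<Prod>i<l. if \<beta>' ! i then walsh L h (as ! i) else 1)"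
    unfolding \<beta>'_def as_def by (rule walsh_dcomp[OF hz a])
  have lb: "length \<beta>' = l" by (simp add: \<beta>'_def as_def)
  have asc: "\<And>i. i < l \<Longrightarrow> as ! i \<in> cube L" using blocks_nth_cube[OF a] by (simp add: as_def)
  have bc: "\<beta>' \<in> cube l" using lb by (simp add: cube_def)
  have G: "(walsh l g \<beta>')^2 \<le> Mg" using gmax bc by blast
  have Mg0: "0 \<le> Mg" by (rule order_trans[OF zero_le_power2 G])
  show ?thesis
  proof (cases "\<exists>i<l. \<beta>' ! i")
    case False
    hence "\<beta>' = replicate l False" by (intro nth_equalityI) (simp_all add: lb)
    hence "walsh l g \<beta>' = 0" using gb by (simp add: balanced_walsh)
    thus ?thesis using W Mg0 Mh by simp
  next
    case True
    then obtain i1 where i1: "i1 < l" "\<beta>' ! i1" by blast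
    define d where "d = (\<lambda>i. (if \<beta>' ! i then walsh L h (as ! i) else 1)^2)"
    have d01: "0 \<le> d i \<and> d i \<le> 1" for i by (simp add: d_def walsh_sq_le1)
    have "(\<Prod>i<l. if \<beta>' ! i then walsh L h (as ! i) else 1)^2 = (\<Prod>i<l. d i)"
      by (simp add: d_def prod_power_distrib)
    also have "\<dots> = d i1 * (\<Prod>i\<in>{..<l} - {i1}. d i)" using i1 by (simp add: prod.remove)
    also have "\<dots> \<le> d i1 * 1"
      by (rule mult_left_mono[OF prod_le_1]) (use d01 in auto)
    also have "\<dots> \<le> Mh" using i1 hmax asc by (simp add: d_def)
    finally have P: "(\<Prod>i<l. if \<beta>' ! i then walsh L h (as ! i) else 1)^2 \<le> Mh" .
    have "(walsh (l*L) (dcomp l L g h) a)^2 = (walsh l g \<beta>')^2 * (\<Prod>i<l. if \<beta>' ! i then walsh L h (as ! i) else 1)^2"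
      by (simp add: W power_mult_distrib)
    also have "\<dots> \<le> Mg * Mh" by (rule mult_mono[OF G P Mg0]) simp
    finally show ?thesis .
  qed
qed

lemma step_attain:
  assumes hb: "balanced L h"
    and \<beta>: "\<beta> \<in> cube l" "i0 < l" "\<forall>i<l. \<beta> ! i \<longleftrightarrow> i = i0"
    and a0: "a0 \<in> cube L" "(walsh L h a0)^2 = Mh" and Mh: "Mh > 0"
  shows "\<exists>a\<in>cube (l*L). (walsh (l*L) (dcomp l L g h) a)^2 = (walsh l g \<beta>)^2 * Mh"
proof -
  define zs where "zs = map (\<lambda>i. if i = i0 then a0 else replicate L False) [0..<l]"
  define a where "a = concat zs"
  have hz: "walsh L h (replicate L False) = 0" using hb by (simp add: balanced_walsh)
  have a0nz: "a0 \<noteq> replicate L False" using a0 Mh hz by auto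
  have zl: "\<forall>z\<in>set zs. length z = L" using a0 by (auto simp: zs_def cube_def)
  have lz: "length zs = l" by (simp add: zs_def)
  have ac: "a \<in> cube (l*L)" using length_concat_const[OF zl] lz by (simp add: a_def cube_def)
  have bl: "blocks L l a = zs" using blocks_concat[OF zl] lz by (simp add: a_def)
  have bb: "map (\<lambda>c. c \<noteq> replicate L False) zs = \<beta>"
    using \<beta> a0nz by (intro nth_equalityI) (auto simp: zs_def cube_def)
  have W: "walsh (l*L) (dcomp l L g h) a = walsh l g \<beta> * (\<Prod>i<l. if \<beta> ! i then walsh L h (zs ! i) else 1)"
    using walsh_dcomp[OF hz ac, of g, unfolded bl bb] .
  have "(\<Prod>i<l. if \<beta> ! i then walsh L h (zs ! i) else 1) = (\<Prod>i<l. if i = i0 then walsh L h a0 else 1)"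
    by (rule prod.cong[OF refl]) (use \<beta> in \<open>auto simp: zs_def\<close>)
  also have "\<dots> = walsh L h a0" using \<beta>(2) by (simp add: prod.delta)
  finally have "walsh (l*L) (dcomp l L g h) a = walsh l g \<beta> * walsh L h a0" using W by simp
  hence "(walsh (l*L) (dcomp l L g h) a)^2 = (walsh l g \<beta>)^2 * Mh" using a0 by (simp add: power_mult_distrib)
  thus ?thesis using ac by blast
qed

theorem theorem5:
  fixes l :: nat and g :: "bool list \<Rightarrow> bool" and \<beta> :: "bool list" and m :: nat
  assumes "balanced l g"
    and "\<beta> \<in> cube l" and "wt \<beta> = 1"
    and "(walsh l g \<beta>)\<^sup>2 = Max ((\<lambda>v. (walsh l g v)\<^sup>2) ` cube l)"
  shows "min_entropy (l ^ (m + 1)) (iter_comp l g m) = real (m + 1) * min_entropy l g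
    \<and> min_entropy (l ^ (m + 1)) (iter_comp l g m) / influence (l ^ (m + 1)) (iter_comp l g m)
      = (min_entropy l g / influence l g) * (real (m + 1) / influence l g ^ m)"
proof -
  note gb = assms(1) and \<beta>c = assms(2)
  have lb: "length \<beta> = l" using \<beta>c by (simp add: cube_def)
  obtain i0 where i0: "i0 < l" "\<forall>i<l. \<beta> ! i \<longleftrightarrow> i = i0" using wt_one[OF assms(3)] lb by auto
  define Mg where "Mg = (walsh l g \<beta>)\<^sup>2"
  have gmax: "\<forall>v\<in>cube l. (walsh l g v)^2 \<le> Mg"
    unfolding Mg_def assms(4) by (auto intro: Max_ge)
  have Mpos: "Mg > 0"
  proof -
    obtain a where a: "a \<in> cube l" "walsh l g a \<noteq> 0" using exists_walsh_nonzero by blast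
    have "0 < (walsh l g a)^2" using a(2) by simp
    also have "\<dots> \<le> Mg" using gmax a(1) by blast
    finally show ?thesis .
  qed
  have claim: "balanced (l^(n+1)) (iter_comp l g n) \<and> (\<forall>a\<in>cube (l^(n+1)). (walsh (l^(n+1)) (iter_comp l g n) a)^2 \<le> Mg^(n+1))
     \<and> (\<exists>a\<in>cube (l^(n+1)). (walsh (l^(n+1)) (iter_comp l g n) a)^2 = Mg^(n+1))
     \<and> influence (l^(n+1)) (iter_comp l g n) = influence l g ^ (n+1)" for n
  proof (induction n)
    case 0
    show ?case using gb gmax \<beta>c by (auto simp: Mg_def)
  next
    case (Suc n)
    define L where "L = l^(n+1)"
    define h where "h = iter_comp l g n"
    have eqL: "l ^ (Suc n + 1) = l * L" by (simp add: L_def)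
    have eqf: "iter_comp l g (Suc n) = dcomp l L g h" by (simp add: L_def h_def)
    have hb: "balanced L h" and hmax: "\<forall>a\<in>cube L. (walsh L h a)^2 \<le> Mg^(n+1)"
      and hinf: "influence L h = influence l g ^ (n+1)"
      using Suc.IH by (simp_all add: L_def h_def)
    obtain a0 where a0: "a0 \<in> cube L" "(walsh L h a0)^2 = Mg^(n+1)" using Suc.IH by (auto simp: L_def h_def)
    have Mh: "Mg^(n+1) > 0" using Mpos by simp
    have pw: "Mg ^ (Suc n + 1) = Mg * Mg^(n+1)" by simp
    show ?case unfolding eqL eqf pw
    proof (intro conjI ballI)
      show "balanced (l * L) (dcomp l L g h)" by (rule dcomp_balanced[OF gb hb])
    next
      fix a assume "a \<in> cube (l * L)"
      thus "(walsh (l * L) (dcomp l L g h) a)\<^sup>2 \<le> Mg * Mg ^ (n + 1)"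
        by (rule step_bound[OF gb hb gmax hmax Mh])
    next
      show "\<exists>a\<in>cube (l * L). (walsh (l * L) (dcomp l L g h) a)\<^sup>2 = Mg * Mg ^ (n + 1)"
        using step_attain[OF hb \<beta>c i0 a0 Mh, of g] by (simp add: Mg_def)
    next
      show "influence (l * L) (dcomp l L g h) = influence l g ^ (Suc n + 1)"
        using influence_dcomp[OF hb, of l g] hinf by simp
    qed
  qed
  have Hg: "min_entropy l g = log 2 (1 / Mg)"
    using min_entropy_eq[OF Mpos gmax \<beta>c] by (simp add: Mg_def)
  have Hm: "min_entropy (l ^ (m + 1)) (iter_comp l g m) = real (m + 1) * min_entropy l g"
  proof -
    have "min_entropy (l ^ (m + 1)) (iter_comp l g m) = log 2 (1 / Mg^(m+1))"
      using claim[of m] Mpos by (auto intro: min_entropy_eq)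
    also have "\<dots> = log 2 ((1 / Mg)^(m+1))" by (simp add: power_one_over)
    also have "\<dots> = real (m + 1) * log 2 (1 / Mg)" using Mpos by (intro log_nat_power) simp
    finally show ?thesis using Hg by simp
  qed
  have Im: "influence (l ^ (m + 1)) (iter_comp l g m) = influence l g ^ (m+1)" using claim[of m] by simp
  show ?thesis
  proof (intro conjI)
    show "min_entropy (l ^ (m + 1)) (iter_comp l g m) = real (m + 1) * min_entropy l g" by (rule Hm)
    show "min_entropy (l ^ (m + 1)) (iter_comp l g m) / influence (l ^ (m + 1)) (iter_comp l g m)
      = (min_entropy l g / influence l g) * (real (m + 1) / influence l g ^ m)"
      unfolding Hm Im by (cases "influence l g = 0") (simp_all add: field_simps)
  qed
qed

end
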